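(* Let $V$ be a real vector space, $\kappa:\mathbb{R}\to\mathbb{R}$ a kernel and $f:\mathbb{R}\to\mathbb{R}$ an envelope, and assume all series below converge absolutely. Let $F$ be kernel interpolation, $Fx(t,\varphi)=\sum_{\tau\in\varphi}x(\tau)\kappa(t-\tau)$. Then the following are equivalent: (i) $\kappa$ preserves every translate of $f$ from its integer samples: for all $t,s\in\mathbb{R}$, $\sum_{k\in\mathbb{Z}} f(t+k)\,\kappa(s-k)=f(t+s)$; (ii) for every waveform $w:\mathbb{T}\to V$, the enveloped static wave $x(s)=f(s)\,w(c(s))$ satisfies $Fx(t,\varphi)=f(t)\,w(\varphi)$ for all $t\in\mathbb{R}$, $\varphi\in\mathbb{T}$.
   Context: $\mathbb{T}=\mathbb{R}/\mathbb{Z}$; $c:\mathbb{R}\to\mathbb{T}$, $c(p)=p+\mathbb{Z}$; an element $\varphi\in\mathbb{T}$ is regarded as the set of reals $\tau$ with $c(\tau)=\varphi$, and $\sum_{\tau\in\varphi}$ runs over all these $\tau$ (i.e. $\tau_0+k$, $k\in\mathbb{Z}$, for a representative $\tau_0$). *)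

theory Defs
  imports "HOL-Analysis.Analysis"
begin

definition int_diff_rel :: "real \<Rightarrow> real \<Rightarrow> bool" where
  "int_diff_rel x y \<longleftrightarrow> x - y \<in> \<int>"

lemma equivp_int_diff_rel: "equivp int_diff_rel"
proof (rule equivpI)
  show "reflp int_diff_rel" by (auto simp: reflp_def int_diff_rel_def)
  show "symp int_diff_rel"
  proof (rule sympI)
    fix x y assume "int_diff_rel x y"
    then have "- (x - y) \<in> \<int>" unfolding int_diff_rel_def by (rule Ints_minus)
    then show "int_diff_rel y x" unfolding int_diff_rel_def by simp
  qed
  show "transp int_diff_rel"
  proof (rule transpI)
    fix x y z assume "int_diff_rel x y" "int_diff_rel y z"
    then have "(x - y) + (y - z) \<in> \<int>" unfolding int_diff_rel_def by (rule Ints_add)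
    then show "int_diff_rel x z" unfolding int_diff_rel_def by simp
  qed
qed

quotient_type torus = real / int_diff_rel
  by (rule equivp_int_diff_rel)

definition c :: "real \<Rightarrow> torus" where
  "c p = abs_torus p"

definition kernel_interp ::
  "(real \<Rightarrow> real) \<Rightarrow> (real \<Rightarrow> 'v::real_normed_vector) \<Rightarrow> real \<Rightarrow> torus \<Rightarrow> 'v" where
  "kernel_interp \<kappa> x t \<phi> = (\<Sum>\<^sub>\<infinity>\<tau>\<in>{\<tau>. c \<tau> = \<phi>}. \<kappa> (t - \<tau>) *\<^sub>R x \<tau>)"

end

theory Submission
  imports Defs
begin

lemma c_eq_iff: "c x = c y \<longleftrightarrow> x - y \<in> \<int>"
  unfolding c_def by (simp add: torus.abs_eq_iff int_diff_rel_def)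

lemma c_surj: "\<exists>t. \<phi> = c t"
  unfolding c_def by (rule exI[of _ "rep_torus \<phi>"]) (simp add: Quotient3_abs_rep[OF Quotient3_torus])

lemma c_shift: "c (t0 + of_int k) = c t0"
  by (simp add: c_eq_iff)

lemma fiber: "{\<tau>. c \<tau> = c t0} = range (\<lambda>k::int. t0 + of_int k)"
proof safe
  fix x assume "c x = c t0"
  then have "x - t0 \<in> \<int>" by (simp add: c_eq_iff)
  then obtain k where "x - t0 = of_int k" by (auto elim: Ints_cases)
  then show "x \<in> range (\<lambda>k::int. t0 + of_int k)" by (intro image_eqI[of _ _ k]) auto
next
  fix k :: int show "c (t0 + of_int k) = c t0" by (simp add: c_eq_iff)
qed

lemma key:
  fixes \<kappa> f :: "real \<Rightarrow> real" and w :: "torus \<Rightarrow> 'v::real_normed_vector"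
  assumes abs_conv: "\<And>t s. (\<lambda>k::int. \<bar>f (t + of_int k) * \<kappa> (s - of_int k)\<bar>) summable_on UNIV"
  shows "kernel_interp \<kappa> (\<lambda>s. f s *\<^sub>R w (c s)) t (c t0)
     = (\<Sum>\<^sub>\<infinity>k::int. f (t0 + of_int k) * \<kappa> ((t - t0) - of_int k)) *\<^sub>R w (c t0)"
proof -
  have inj: "inj (\<lambda>k::int. t0 + of_int k)" by (auto simp: inj_def)
  have "kernel_interp \<kappa> (\<lambda>s. f s *\<^sub>R w (c s)) t (c t0)
      = (\<Sum>\<^sub>\<infinity>\<tau>\<in>range (\<lambda>k::int. t0 + of_int k). \<kappa> (t - \<tau>) *\<^sub>R (f \<tau> *\<^sub>R w (c \<tau>)))"
    unfolding kernel_interp_def fiber ..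
  also have "\<dots> = (\<Sum>\<^sub>\<infinity>k::int. \<kappa> (t - (t0 + of_int k)) *\<^sub>R (f (t0 + of_int k) *\<^sub>R w (c (t0 + of_int k))))"
    by (subst infsum_reindex[OF inj]) (simp add: o_def)
  also have "\<dots> = (\<Sum>\<^sub>\<infinity>k::int. (f (t0 + of_int k) * \<kappa> ((t - t0) - of_int k)) *\<^sub>R w (c t0))"
    by (intro infsum_cong) (simp add: c_shift algebra_simps)
  also have "\<dots> = (\<Sum>\<^sub>\<infinity>k::int. f (t0 + of_int k) * \<kappa> ((t - t0) - of_int k)) *\<^sub>R w (c t0)"
    by (intro infsum_scaleR_left) (rule summable_on_iff_abs_summable_on_real[THEN iffD2], simp only: real_norm_def, rule abs_conv[of t0 "t - t0"])
  finally show ?thesis .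
qed

theorem mainTheorem4:
  fixes \<kappa> f :: "real \<Rightarrow> real"
  assumes nontriv: "\<exists>v::'v::real_normed_vector. v \<noteq> 0"
    and abs_conv: "\<And>t s. (\<lambda>k::int. \<bar>f (t + of_int k) * \<kappa> (s - of_int k)\<bar>) summable_on UNIV"
  shows "(\<forall>t s. (\<Sum>\<^sub>\<infinity>k::int. f (t + of_int k) * \<kappa> (s - of_int k)) = f (t + s))
     \<longleftrightarrow> (\<forall>(w::torus \<Rightarrow> 'v) t \<phi>.
            kernel_interp \<kappa> (\<lambda>s. f s *\<^sub>R w (c s)) t \<phi> = f t *\<^sub>R w \<phi>)"
proof
  assume H: "\<forall>t s. (\<Sum>\<^sub>\<infinity>k::int. f (t + of_int k) * \<kappa> (s - of_int k)) = f (t + s)"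
  show "\<forall>(w::torus \<Rightarrow> 'v) t \<phi>. kernel_interp \<kappa> (\<lambda>s. f s *\<^sub>R w (c s)) t \<phi> = f t *\<^sub>R w \<phi>"
  proof (intro allI)
    fix w :: "torus \<Rightarrow> 'v" and t \<phi>
    obtain t0 where p: "\<phi> = c t0" using c_surj by blast
    show "kernel_interp \<kappa> (\<lambda>s. f s *\<^sub>R w (c s)) t \<phi> = f t *\<^sub>R w \<phi>"
      unfolding p key[OF abs_conv] using H[rule_format, of t0 "t - t0"] by simp
  qed
next
  assume H: "\<forall>(w::torus \<Rightarrow> 'v) t \<phi>. kernel_interp \<kappa> (\<lambda>s. f s *\<^sub>R w (c s)) t \<phi> = f t *\<^sub>R w \<phi>"
  obtain v :: 'v where v: "v \<noteq> 0" using nontriv by blast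
  show "\<forall>t s. (\<Sum>\<^sub>\<infinity>k::int. f (t + of_int k) * \<kappa> (s - of_int k)) = f (t + s)"
  proof (intro allI)
    fix t s
    have e1: "kernel_interp \<kappa> (\<lambda>s. f s *\<^sub>R v) (t + s) (c t) = f (t + s) *\<^sub>R v"
      using H[rule_format, of "\<lambda>_. v" "t + s" "c t"] .
    have e2: "kernel_interp \<kappa> (\<lambda>s. f s *\<^sub>R v) (t + s) (c t)
        = (\<Sum>\<^sub>\<infinity>k::int. f (t + of_int k) * \<kappa> ((t + s - t) - of_int k)) *\<^sub>R v"
      using key[OF abs_conv, where w="\<lambda>_. v" and t="t + s" and t0=t] .
    have ts: "t + s - t = s" by simp
    have "(\<Sum>\<^sub>\<infinity>k::int. f (t + of_int k) * \<kappa> (s - of_int k)) *\<^sub>R v = f (t + s) *\<^sub>R v"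
      using trans[OF e2[symmetric] e1] unfolding ts .
    then show "(\<Sum>\<^sub>\<infinity>k::int. f (t + of_int k) * \<kappa> (s - of_int k)) = f (t + s)"
      using v by (simp only: scaleR_cancel_right) blast
  qed
qed

end
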